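(* On six qubits let $|\Psi\rangle_6=\tfrac{1}{\sqrt2}(|0\rangle_6+|\overline{\mathrm{D}}\rangle_6)$ with $|\overline{\mathrm{D}}\rangle_6=\tfrac13\sum_{\{i,j\}\in P}|ij\rangle_6$, where $P=\{\{1,3\},\{1,4\},\{1,5\},\{2,4\},\{2,5\},\{2,6\},\{3,5\},\{3,6\},\{4,6\}\}$. Let $\mathcal{N}_2$ be the neighborhood structure consisting of all two-element subsets of $\{1,\dots,6\}$. Then $|\Psi\rangle_6$ is UDA relative to $\mathcal{N}_2$; moreover, the 2-local operator $\mathbb{W}_6=\sum_{\{i,j\}\in P}(\sigma^+_i\sigma^+_j+\sigma^-_j\sigma^-_i)$ satisfies $\langle\Psi|\mathbb{W}_6|\Psi\rangle_6>\langle\phi|\mathbb{W}_6|\phi\rangle$ for every normalized $|\phi\rangle\in\mathcal{H}_{\mathcal{N}_2}(|\Psi\rangle_6)$ with $|\phi\rangle\langle\phi|\ne|\Psi\rangle_6\langle\Psi|$.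
   Context: $\mathcal{H}=(\mathbb{C}^2)^{\otimes6}$. $|0\rangle_6=|0\rangle^{\otimes6}$ and $|ij\rangle_6$ is the computational basis state with qubits $i,j$ in $|1\rangle$ and all others in $|0\rangle$. On a pair of qubits $i,j$, $\sigma^+_i\sigma^+_j$ acts as $|11\rangle\langle00|$ and $\sigma^-_j\sigma^-_i$ as its adjoint $|00\rangle\langle11|$ (tensored with identity elsewhere). For $\rho=|\psi\rangle\langle\psi|$ and a neighborhood $\mathcal{N}_k$ with complement $\overline{\mathcal{N}}_k$, $\rho_{\mathcal{N}_k}=\mathrm{tr}_{\overline{\mathcal{N}}_k}\rho$; the DQLS subspace is $\mathcal{H}_{\mathcal{N}}(|\psi\rangle)=\bigcap_{\mathcal{N}_k\in\mathcal{N}}\mathrm{supp}(\rho_{\mathcal{N}_k}\otimes I_{\overline{\mathcal{N}}_k})$. A state $\rho$ is UDA relative to $\mathcal{N}$ if no density operator $\sigma\ne\rho$ has $\sigma_{\mathcal{N}_k}=\rho_{\mathcal{N}_k}$ for all $\mathcal{N}_k\in\mathcal{N}$. *)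

theory Defs
  imports Complex_Main
begin

text \<open>Six qubits labelled 1..6. A computational basis state is identified with the
set of qubits that are in state |1>. Vectors of H = (C^2)^{\<otimes>6} are functions on
subsets of {1..6} (zero elsewhere); operators are matrices indexed by such subsets.\<close>

type_synonym qvec = "nat set \<Rightarrow> complex"
type_synonym qop = "nat set \<Rightarrow> nat set \<Rightarrow> complex"

definition Q :: "nat set" where "Q = {1..6}"

definition ket :: "nat set \<Rightarrow> qvec" where
  "ket S = (\<lambda>T. if T = S then 1 else 0)"

definition inner :: "qvec \<Rightarrow> qvec \<Rightarrow> complex" where
  "inner v w = (\<Sum>S\<in>Pow Q. cnj (v S) * w S)"

definition app :: "qop \<Rightarrow> qvec \<Rightarrow> qvec" where
  "app A v = (\<lambda>S. if S \<subseteq> Q then (\<Sum>T\<in>Pow Q. A S T * v T) else 0)"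

definition proj :: "qvec \<Rightarrow> qop" where
  "proj \<psi> = (\<lambda>S T. if S \<subseteq> Q \<and> T \<subseteq> Q then \<psi> S * cnj (\<psi> T) else 0)"

definition density :: "qop \<Rightarrow> bool" where
  "density \<sigma> \<longleftrightarrow>
     (\<forall>S T. \<not> (S \<subseteq> Q \<and> T \<subseteq> Q) \<longrightarrow> \<sigma> S T = 0) \<and>
     (\<forall>v. Im (inner v (app \<sigma> v)) = 0 \<and> Re (inner v (app \<sigma> v)) \<ge> 0) \<and>
     (\<Sum>S\<in>Pow Q. \<sigma> S S) = 1"

definition ptrace :: "nat set \<Rightarrow> qop \<Rightarrow> qop" where
  "ptrace N \<rho> = (\<lambda>A B. if A \<subseteq> N \<and> B \<subseteq> N
        then (\<Sum>C\<in>Pow (Q - N). \<rho> (A \<union> C) (B \<union> C)) else 0)"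

text \<open>X \<otimes> I on the complement of N.\<close>
definition tensor_id :: "nat set \<Rightarrow> qop \<Rightarrow> qop" where
  "tensor_id N X = (\<lambda>S T. if S \<subseteq> Q \<and> T \<subseteq> Q \<and> S - N = T - N
        then X (S \<inter> N) (T \<inter> N) else 0)"

definition supp :: "qop \<Rightarrow> qvec set" where
  "supp A = range (app A)"

definition DQLS :: "nat set set \<Rightarrow> qvec \<Rightarrow> qvec set" where
  "DQLS Ns \<psi> = (\<Inter>N\<in>Ns. supp (tensor_id N (ptrace N (proj \<psi>))))"

definition UDA :: "nat set set \<Rightarrow> qop \<Rightarrow> bool" where
  "UDA Ns \<rho> \<longleftrightarrow> (\<forall>\<sigma>. density \<sigma> \<and> (\<forall>N\<in>Ns. ptrace N \<sigma> = ptrace N \<rho>) \<longrightarrow> \<sigma> = \<rho>)"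

definition N2 :: "nat set set" where
  "N2 = {N. N \<subseteq> Q \<and> card N = 2}"

definition P :: "nat set set" where
  "P = {{1,3},{1,4},{1,5},{2,4},{2,5},{2,6},{3,5},{3,6},{4,6}}"

definition Dbar :: qvec where
  "Dbar = (\<lambda>S. (1/3) * (\<Sum>p\<in>P. ket p S))"

definition Psi :: qvec where
  "Psi = (\<lambda>S. (ket {} S + Dbar S) / complex_of_real (sqrt 2))"

text \<open>sigma+_i sigma+_j = |11><00| on qubits p={i,j}, identity elsewhere, and its adjoint.\<close>
definition raise2 :: "nat set \<Rightarrow> qop" where
  "raise2 p = (\<lambda>S T. if S \<subseteq> Q \<and> T \<subseteq> Q \<and> T \<inter> p = {} \<and> S = T \<union> p then 1 else 0)"

definition lower2 :: "nat set \<Rightarrow> qop" where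
  "lower2 p = (\<lambda>S T. if S \<subseteq> Q \<and> T \<subseteq> Q \<and> S \<inter> p = {} \<and> T = S \<union> p then 1 else 0)"

definition W6 :: qop where
  "W6 = (\<lambda>S T. \<Sum>p\<in>P. raise2 p S T + lower2 p S T)"

end

theory Submission
  imports Defs
begin


definition E :: "nat set set" where "E = {{1,2},{2,3},{3,4},{4,5},{5,6},{1,6}}"
definition D :: "nat set set" where "D = {{},{1},{2},{3},{4},{5},{6},{1,3},{1,4},{1,5},{2,4},{2,5},{2,6},{3,5},{3,6},{4,6},{1,3,5},{2,4,6}}"
definition Dl :: "nat set list" where "Dl = [{},{1},{2},{3},{4},{5},{6},{1,3},{1,4},{1,5},{2,4},{2,5},{2,6},{3,5},{3,6},{4,6},{1,3,5},{2,4,6}]"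
definition Pl :: "nat set list" where "Pl = [{1,3},{1,4},{1,5},{2,4},{2,5},{2,6},{3,5},{3,6},{4,6}]"
definition g :: "nat set \<Rightarrow> bool list" where "g S = [1\<in>S, 2\<in>S, 3\<in>S, 4\<in>S, 5\<in>S, 6\<in>S]"

lemma Q_eq: "Q = {1,2,3,4,5,6}" unfolding Q_def by auto
lemma finQ0[simp]: "finite Q" unfolding Q_def by simp
lemma finQ[simp]: "finite (Pow Q)" unfolding Q_def by simp

lemma PowQ: "Pow Q = {{Suc 0, 2, 3, 4, 5, 6}, {Suc 0, 2, 3, 4, 5}, {Suc 0, 2, 3, 4, 6},
      {Suc 0, 2, 3, 4}, {Suc 0, 2, 3, 5, 6}, {Suc 0, 2, 3, 5},
      {Suc 0, 2, 3, 6}, {Suc 0, 2, 3}, {Suc 0, 2, 4, 5, 6}, {Suc 0, 2, 4, 5},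
      {Suc 0, 2, 4, 6}, {Suc 0, 2, 4}, {Suc 0, 2, 5, 6}, {Suc 0, 2, 5},
      {Suc 0, 2, 6}, {Suc 0, 2}, {Suc 0, 3, 4, 5, 6}, {Suc 0, 3, 4, 5},
      {Suc 0, 3, 4, 6}, {Suc 0, 3, 4}, {Suc 0, 3, 5, 6}, {Suc 0, 3, 5},
      {Suc 0, 3, 6}, {Suc 0, 3}, {Suc 0, 4, 5, 6}, {Suc 0, 4, 5},
      {Suc 0, 4, 6}, {Suc 0, 4}, {Suc 0, 5, 6}, {Suc 0, 5}, {Suc 0, 6},
      {Suc 0}, {2, 3, 4, 5, 6}, {2, 3, 4, 5}, {2, 3, 4, 6}, {2, 3, 4},
      {2, 3, 5, 6}, {2, 3, 5}, {2, 3, 6}, {2, 3}, {2, 4, 5, 6}, {2, 4, 5},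
      {2, 4, 6}, {2, 4}, {2, 5, 6}, {2, 5}, {2, 6}, {2}, {3, 4, 5, 6},
      {3, 4, 5}, {3, 4, 6}, {3, 4}, {3, 5, 6}, {3, 5}, {3, 6}, {3},
      {4, 5, 6}, {4, 5}, {4, 6}, {4}, {5, 6}, {5}, {6}, {}}"
    by (simp add: Q_eq Pow_insert)

lemma combC: assumes "S \<subseteq> Q" "\<forall>e\<in>E. \<not> e \<subseteq> S" shows "S \<in> D"
proof -
  have "S \<in> Pow Q" using assms(1) by auto
  then have "S \<in> {{Suc 0, 2, 3, 4, 5, 6}, {Suc 0, 2, 3, 4, 5}, {Suc 0, 2, 3, 4, 6},
      {Suc 0, 2, 3, 4}, {Suc 0, 2, 3, 5, 6}, {Suc 0, 2, 3, 5},
      {Suc 0, 2, 3, 6}, {Suc 0, 2, 3}, {Suc 0, 2, 4, 5, 6}, {Suc 0, 2, 4, 5},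
      {Suc 0, 2, 4, 6}, {Suc 0, 2, 4}, {Suc 0, 2, 5, 6}, {Suc 0, 2, 5},
      {Suc 0, 2, 6}, {Suc 0, 2}, {Suc 0, 3, 4, 5, 6}, {Suc 0, 3, 4, 5},
      {Suc 0, 3, 4, 6}, {Suc 0, 3, 4}, {Suc 0, 3, 5, 6}, {Suc 0, 3, 5},
      {Suc 0, 3, 6}, {Suc 0, 3}, {Suc 0, 4, 5, 6}, {Suc 0, 4, 5},
      {Suc 0, 4, 6}, {Suc 0, 4}, {Suc 0, 5, 6}, {Suc 0, 5}, {Suc 0, 6},
      {Suc 0}, {2, 3, 4, 5, 6}, {2, 3, 4, 5}, {2, 3, 4, 6}, {2, 3, 4},
      {2, 3, 5, 6}, {2, 3, 5}, {2, 3, 6}, {2, 3}, {2, 4, 5, 6}, {2, 4, 5},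
      {2, 4, 6}, {2, 4}, {2, 5, 6}, {2, 5}, {2, 6}, {2}, {3, 4, 5, 6},
      {3, 4, 5}, {3, 4, 6}, {3, 4}, {3, 5, 6}, {3, 5}, {3, 6}, {3},
      {4, 5, 6}, {4, 5}, {4, 6}, {4}, {5, 6}, {5}, {6}, {}}" by (simp only: PowQ)
  then show ?thesis using assms(2) unfolding E_def
    apply (simp only: insert_iff empty_iff simp_thms)
    apply (elim disjE; hypsubst; simp add: insert_subset D_def One_nat_def)
    done
qed

lemma g_eq: assumes "S \<subseteq> Q" "T \<subseteq> Q" shows "(S = T) = (g S = g T)"
proof
  assume "g S = g T"
  then have "\<forall>x\<in>Q. (x \<in> S) = (x \<in> T)" unfolding g_def Q_eq by auto
  then show "S = T" using assms by blast
qed simp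

lemma D_set: "D = set Dl" unfolding D_def Dl_def by simp
lemma P_set: "P = set Pl" unfolding P_def Pl_def by simp
lemma Dl_dist: "distinct Dl"
proof -
  have "distinct (map g Dl)" unfolding Dl_def g_def by simp
  then show ?thesis by (simp add: distinct_map)
qed
lemma Pl_dist: "distinct Pl"
proof -
  have "distinct (map g Pl)" unfolding Pl_def g_def by simp
  then show ?thesis by (simp add: distinct_map)
qed

lemma sumD: "(\<Sum>S\<in>D. f S) = f {} + f {1} + f {2} + f {3} + f {4} + f {5} + f {6} + f {1,3} + f {1,4} + f {1,5} + f {2,4} + f {2,5} + f {2,6} + f {3,5} + f {3,6} + f {4,6} + f {1,3,5} + f {2,4,6}"
  unfolding D_set sum.distinct_set_conv_list[OF Dl_dist] by (simp add: Dl_def add.assoc)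

lemma sumP: "(\<Sum>S\<in>P. f S) = f {1,3} + f {1,4} + f {1,5} + f {2,4} + f {2,5} + f {2,6} + f {3,5} + f {3,6} + f {4,6}"
  unfolding P_set sum.distinct_set_conv_list[OF Pl_dist] by (simp add: Pl_def add.assoc)

lemma D_sub: "D \<subseteq> Pow Q" unfolding D_def Q_eq by auto
lemma P_sub: "P \<subseteq> D" unfolding D_def P_def by auto
lemma emp_notP[simp]: "{} \<notin> P" unfolding P_def by auto
lemma finP[simp]: "finite P" unfolding P_def by simp

lemma E_not_sub_P: "e \<in> E \<Longrightarrow> p \<in> P \<Longrightarrow> \<not> e \<subseteq> p"
  unfolding E_def P_def
  apply (simp only: insert_iff empty_iff simp_thms)
  apply (elim disjE; hypsubst; simp add: insert_subset)
  done


definition fP :: "nat set \<Rightarrow> complex" where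
  "fP S = (if S = {} then 1 else if S \<in> P then 1/3 else 0)"

lemma Psi_eq: "Psi S = fP S / complex_of_real (sqrt 2)"
proof -
  have "(\<Sum>p\<in>P. ket p S) = (if S \<in> P then 1 else 0)"
    unfolding ket_def by (simp add: sum.delta')
  then show ?thesis unfolding Psi_def Dbar_def fP_def by (auto simp: ket_def)
qed

lemma inner_app: "inner u (app \<sigma> v) = (\<Sum>S\<in>Pow Q. \<Sum>T\<in>Pow Q. cnj (u S) * \<sigma> S T * v T)"
  unfolding inner_def app_def by (auto simp: sum_distrib_left mult.assoc intro!: sum.cong)

lemma sum_ketR: assumes "A \<subseteq> Q" shows "(\<Sum>S\<in>Pow Q. h S * ket A S) = h A"
proof -
  have "(\<Sum>S\<in>Pow Q. h S * ket A S) = (\<Sum>S\<in>Pow Q. if S = A then h S else 0)"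
    by (rule sum.cong) (auto simp: ket_def)
  also have "\<dots> = h A" using assms by (subst sum.delta) auto
  finally show ?thesis .
qed

lemma sum_ketL: assumes "A \<subseteq> Q" shows "(\<Sum>S\<in>Pow Q. ket A S * h S) = h A"
  using sum_ketR[OF assms, of h] by (simp add: mult.commute)

lemma cnj_ket[simp]: "cnj (ket A S) = ket A S" unfolding ket_def by simp

lemma q_add:
  assumes A: "A \<subseteq> Q"
  shows "inner (\<lambda>S. w S + a * ket A S) (app \<sigma> (\<lambda>S. w S + a * ket A S)) =
    inner w (app \<sigma> w) + a * (\<Sum>S\<in>Pow Q. cnj (w S) * \<sigma> S A) + cnj a * (\<Sum>T\<in>Pow Q. \<sigma> A T * w T)
    + cnj a * a * \<sigma> A A"
proof -
  let ?k = "ket A"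
  have e: "\<And>S T. cnj (w S + a * ?k S) * \<sigma> S T * (w T + a * ?k T) =
     cnj (w S) * \<sigma> S T * w T + (a * cnj (w S) * \<sigma> S T) * ?k T + ?k S * (cnj a * \<sigma> S T * w T)
     + ?k S * ((cnj a * a * \<sigma> S T) * ?k T)"
    by (simp add: algebra_simps)
  have "inner (\<lambda>S. w S + a * ?k S) (app \<sigma> (\<lambda>S. w S + a * ?k S)) =
     (\<Sum>S\<in>Pow Q. \<Sum>T\<in>Pow Q. cnj (w S) * \<sigma> S T * w T) +
     (\<Sum>S\<in>Pow Q. \<Sum>T\<in>Pow Q. (a * cnj (w S) * \<sigma> S T) * ?k T) +
     (\<Sum>S\<in>Pow Q. ?k S * (\<Sum>T\<in>Pow Q. cnj a * \<sigma> S T * w T)) +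
     (\<Sum>S\<in>Pow Q. ?k S * (\<Sum>T\<in>Pow Q. (cnj a * a * \<sigma> S T) * ?k T))"
    unfolding inner_app e by (simp add: sum.distrib sum_distrib_left)
  also have "\<dots> = inner w (app \<sigma> w) + (\<Sum>S\<in>Pow Q. a * cnj (w S) * \<sigma> S A) +
     (\<Sum>T\<in>Pow Q. cnj a * \<sigma> A T * w T) + cnj a * a * \<sigma> A A"
    unfolding inner_app sum_ketR[OF A] sum_ketL[OF A] by simp
  finally show ?thesis by (simp add: sum_distrib_left mult.assoc)
qed

lemma q_ket: assumes "A \<subseteq> Q" shows "inner (ket A) (app \<sigma> (ket A)) = \<sigma> A A"
  unfolding inner_app using assms by (simp add: sum_ketR sum_ketL)

lemma q_two:
  assumes A: "A \<subseteq> Q" and B: "B \<subseteq> Q"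
  shows "inner (\<lambda>S. ket A S + a * ket B S) (app \<sigma> (\<lambda>S. ket A S + a * ket B S)) =
    \<sigma> A A + a * \<sigma> A B + cnj a * \<sigma> B A + cnj a * a * \<sigma> B B"
  unfolding q_add[OF B] q_ket[OF A] using A by (simp add: sum_ketR sum_ketL)


lemma lin0: fixes s d :: real assumes h: "\<And>r. 0 \<le> r * s + r^2 * d" shows "s = 0"
proof (rule ccontr)
  assume s: "s \<noteq> 0"
  define k where "k = \<bar>d\<bar> + 1"
  have k: "k > 0" "d < k" unfolding k_def by auto
  have "0 \<le> (-s/k) * s + (-s/k)^2 * d" by (rule h)
  then have "0 \<le> k^2 * ((-s/k) * s + (-s/k)^2 * d)" by simp
  also have "\<dots> = s^2 * (d - k)" using k by (simp add: field_simps power2_eq_square)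
  also have "\<dots> < 0" using s k by (simp add: mult_pos_neg)
  finally show False by simp
qed

lemma quad0: fixes X Y d :: complex
  assumes h: "\<And>a. Im (a * Y + cnj a * X + cnj a * a * d) = 0 \<and> 0 \<le> Re (a * Y + cnj a * X + cnj a * a * d)"
  shows "X = 0 \<and> Y = 0"
proof -
  have r: "0 \<le> r * Re (X + Y) + r^2 * Re d" for r :: real
    using h[of "complex_of_real r"] by (simp add: power2_eq_square; simp add: algebra_simps)
  have i: "0 \<le> r * (Im X - Im Y) + r^2 * Re d" for r :: real
    using h[of "\<i> * complex_of_real r"] by (simp add: power2_eq_square; simp add: algebra_simps)
  have im1: "Im X + Im Y + Im d = 0" using h[of 1] by simp
  have im2: "- Im X - Im Y + Im d = 0" using h[of "-1"] by simp
  have im3: "Re Y - Re X + Im d = 0" using h[of "\<i>"] by simp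
  have a1: "Re (X + Y) = 0" by (rule lin0[OF r])
  have a2: "Im X - Im Y = 0" by (rule lin0[OF i])
  have "Re X = 0" "Re Y = 0" "Im X = 0" "Im Y = 0" using a1 a2 im1 im2 im3 by auto
  then show ?thesis by (simp add: complex_eq_iff)
qed

lemma kernel:
  assumes dens: "density \<sigma>" and q0: "inner w (app \<sigma> w) = 0" and A: "A \<subseteq> Q"
  shows "(\<Sum>T\<in>Pow Q. \<sigma> A T * w T) = 0 \<and> (\<Sum>S\<in>Pow Q. cnj (w S) * \<sigma> S A) = 0"
proof -
  from dens have pos: "\<And>v. Im (inner v (app \<sigma> v)) = 0 \<and> 0 \<le> Re (inner v (app \<sigma> v))"
    by (simp add: density_def)
  show ?thesis
  proof (rule quad0)
    fix a
    show "Im (a * (\<Sum>S\<in>Pow Q. cnj (w S) * \<sigma> S A) + cnj a * (\<Sum>T\<in>Pow Q. \<sigma> A T * w T) + cnj a * a * \<sigma> A A) = 0 \<and>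
       0 \<le> Re (a * (\<Sum>S\<in>Pow Q. cnj (w S) * \<sigma> S A) + cnj a * (\<Sum>T\<in>Pow Q. \<sigma> A T * w T) + cnj a * a * \<sigma> A A)"
      using pos[of "\<lambda>S. w S + a * ket A S"] unfolding q_add[OF A] q0 by simp
  qed
qed

definition TW :: "qop \<Rightarrow> complex" where "TW \<sigma> = (\<Sum>S\<in>Pow Q. \<Sum>T\<in>Pow Q. \<sigma> S T * W6 T S)"
definition tr :: "qop \<Rightarrow> complex" where "tr \<sigma> = (\<Sum>S\<in>Pow Q. \<sigma> S S)"
definition Z :: "qop \<Rightarrow> bool" where "Z \<sigma> \<longleftrightarrow> (\<forall>S T. S \<notin> D \<longrightarrow> \<sigma> S T = 0 \<and> \<sigma> T S = 0)"

lemma P_subQ: "p \<in> P \<Longrightarrow> p \<subseteq> Q" using P_sub D_sub by blast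

lemma raise_sum: assumes "p \<subseteq> Q" "S \<subseteq> Q"
  shows "(\<Sum>T\<in>Pow Q. \<sigma> S T * raise2 p T S) = (if S \<inter> p = {} then \<sigma> S (S \<union> p) else 0)"
proof -
  have "(\<Sum>T\<in>Pow Q. \<sigma> S T * raise2 p T S) = (\<Sum>T\<in>Pow Q. if T = S \<union> p then (if S \<inter> p = {} then \<sigma> S T else 0) else 0)"
    by (rule sum.cong) (use assms in \<open>auto simp: raise2_def\<close>)
  also have "\<dots> = (if S \<inter> p = {} then \<sigma> S (S \<union> p) else 0)" using assms by (subst sum.delta) auto
  finally show ?thesis .
qed

lemma lower_sum: assumes "p \<subseteq> Q" "T \<subseteq> Q"
  shows "(\<Sum>S\<in>Pow Q. \<sigma> S T * lower2 p T S) = (if T \<inter> p = {} then \<sigma> (T \<union> p) T else 0)"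
proof -
  have "(\<Sum>S\<in>Pow Q. \<sigma> S T * lower2 p T S) = (\<Sum>S\<in>Pow Q. if S = T \<union> p then (if T \<inter> p = {} then \<sigma> S T else 0) else 0)"
    by (rule sum.cong) (use assms in \<open>auto simp: lower2_def\<close>)
  also have "\<dots> = (if T \<inter> p = {} then \<sigma> (T \<union> p) T else 0)" using assms by (subst sum.delta) auto
  finally show ?thesis .
qed

lemma TW_formula: "TW \<sigma> = (\<Sum>p\<in>P. \<Sum>C\<in>Pow Q. if C \<inter> p = {} then \<sigma> C (C \<union> p) + \<sigma> (C \<union> p) C else 0)"
proof -
  have "TW \<sigma> = (\<Sum>S\<in>Pow Q. \<Sum>T\<in>Pow Q. \<Sum>p\<in>P. \<sigma> S T * raise2 p T S + \<sigma> S T * lower2 p T S)"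
    unfolding TW_def W6_def by (simp add: sum_distrib_left distrib_left)
  also have "\<dots> = (\<Sum>S\<in>Pow Q. \<Sum>p\<in>P. \<Sum>T\<in>Pow Q. \<sigma> S T * raise2 p T S + \<sigma> S T * lower2 p T S)"
    by (rule sum.cong[OF refl], rule sum.swap)
  also have "\<dots> = (\<Sum>p\<in>P. \<Sum>S\<in>Pow Q. \<Sum>T\<in>Pow Q. \<sigma> S T * raise2 p T S + \<sigma> S T * lower2 p T S)"
    by (rule sum.swap)
  also have "\<dots> = (\<Sum>p\<in>P. (\<Sum>S\<in>Pow Q. \<Sum>T\<in>Pow Q. \<sigma> S T * raise2 p T S) + (\<Sum>T\<in>Pow Q. \<Sum>S\<in>Pow Q. \<sigma> S T * lower2 p T S))"
    by (rule sum.cong[OF refl]) (simp add: sum.distrib sum.swap[of "\<lambda>S T. \<sigma> S T * lower2 _ T S" "Pow Q" "Pow Q"])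
  also have "\<dots> = (\<Sum>p\<in>P. (\<Sum>C\<in>Pow Q. if C \<inter> p = {} then \<sigma> C (C \<union> p) else 0) + (\<Sum>C\<in>Pow Q. if C \<inter> p = {} then \<sigma> (C \<union> p) C else 0))"
    by (rule sum.cong[OF refl]) (simp add: raise_sum lower_sum P_subQ)
  also have "\<dots> = (\<Sum>p\<in>P. \<Sum>C\<in>Pow Q. if C \<inter> p = {} then \<sigma> C (C \<union> p) + \<sigma> (C \<union> p) C else 0)"
    apply (rule sum.cong[OF refl]) apply (subst sum.distrib[symmetric]) apply (rule sum.cong) apply auto done
  finally show ?thesis .
qed



definition qv :: "qop \<Rightarrow> qvec \<Rightarrow> complex" where "qv \<sigma> w = inner w (app \<sigma> w)"

lemma tr_Z: assumes "Z \<sigma>" shows "tr \<sigma> = (\<Sum>S\<in>D. \<sigma> S S)"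
  unfolding tr_def
  by (rule sum.mono_neutral_right[OF finQ D_sub]) (use assms in \<open>auto simp: Z_def\<close>)

lemma TW_Z: assumes "Z \<sigma>" shows "TW \<sigma> = (\<Sum>p\<in>P. \<Sum>C\<in>D. if C \<inter> p = {} then \<sigma> C (C \<union> p) + \<sigma> (C \<union> p) C else 0)"
  unfolding TW_formula
  by (rule sum.cong[OF refl], rule sum.mono_neutral_right[OF finQ D_sub]) (use assms in \<open>auto simp: Z_def\<close>)

lemma GD: "g ` D = {[False,False,False,False,False,False],
  [True,False,False,False,False,False],[False,True,False,False,False,False],[False,False,True,False,False,False],
  [False,False,False,True,False,False],[False,False,False,False,True,False],[False,False,False,False,False,True],
  [True,False,True,False,False,False],[True,False,False,True,False,False],[True,False,False,False,True,False],
  [False,True,False,True,False,False],[False,True,False,False,True,False],[False,True,False,False,False,True],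
  [False,False,True,False,True,False],[False,False,True,False,False,True],[False,False,False,True,False,True],
  [True,False,True,False,True,False],[False,True,False,True,False,True]}"
  unfolding D_def g_def by simp

lemma memD: assumes "S \<subseteq> Q" shows "(S \<in> D) = (g S \<in> g ` D)"
proof
  assume "g S \<in> g ` D"
  then obtain S' where "S' \<in> D" "g S = g S'" by auto
  moreover have "S' \<subseteq> Q" using \<open>S' \<in> D\<close> D_sub by auto
  ultimately show "S \<in> D" using g_eq[OF assms] by auto
qed auto

lemma memD': assumes "S \<subseteq> Q" shows "(S \<in> D) = ([1\<in>S, 2\<in>S, 3\<in>S, 4\<in>S, 5\<in>S, 6\<in>S] \<in> {[False,False,False,False,False,False],
  [True,False,False,False,False,False],[False,True,False,False,False,False],[False,False,True,False,False,False],
  [False,False,False,True,False,False],[False,False,False,False,True,False],[False,False,False,False,False,True],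
  [True,False,True,False,False,False],[True,False,False,True,False,False],[True,False,False,False,True,False],
  [False,True,False,True,False,False],[False,True,False,False,True,False],[False,True,False,False,False,True],
  [False,False,True,False,True,False],[False,False,True,False,False,True],[False,False,False,True,False,True],
  [True,False,True,False,True,False],[False,True,False,True,False,True]})"
  using memD[OF assms] unfolding GD by (simp add: g_def)

lemma ins_norm: "insert (3::nat) {1,5} = {1,3,5}" "insert (5::nat) {1,3} = {1,3,5}"
   "insert (4::nat) {2,6} = {2,4,6}" "insert (6::nat) {2,4} = {2,4,6}"
   "{3,5,Suc 0} = {Suc 0,3,5}" "{Suc 0,5,3} = {Suc 0,3,5}" "{4,6,2::nat} = {2,4,6}" "{2,6,4::nat} = {2,4,6}"
  by auto

lemma litQ: "{} \<subseteq> Q" "{1} \<subseteq> Q" "{2} \<subseteq> Q" "{3} \<subseteq> Q" "{4} \<subseteq> Q" "{5} \<subseteq> Q" "{6} \<subseteq> Q" "{1,3} \<subseteq> Q" "{1,4} \<subseteq> Q" "{1,5} \<subseteq> Q" "{2,4} \<subseteq> Q" "{2,5} \<subseteq> Q" "{2,6} \<subseteq> Q" "{3,5} \<subseteq> Q" "{3,6} \<subseteq> Q" "{4,6} \<subseteq> Q" "{1,3,5} \<subseteq> Q" "{2,4,6} \<subseteq> Q"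
  by (simp_all add: Q_eq)

definition wp :: "nat set \<Rightarrow> qvec" where "wp p = (\<lambda>S. ket p S + (-1/3) * ket {} S)"
definition wt :: "nat set \<Rightarrow> nat \<Rightarrow> qvec" where "wt t c = (\<lambda>S. ket t S + (-1) * ket {c} S)"

lemma SOS: assumes Z: "Z \<sigma>" shows "3 * tr \<sigma> - TW \<sigma> =
    3 * qv \<sigma> (wp {1,3}) +
    3 * qv \<sigma> (wp {1,4}) +
    3 * qv \<sigma> (wp {1,5}) +
    3 * qv \<sigma> (wp {2,4}) +
    3 * qv \<sigma> (wp {2,5}) +
    3 * qv \<sigma> (wp {2,6}) +
    3 * qv \<sigma> (wp {3,5}) +
    3 * qv \<sigma> (wp {3,6}) +
    3 * qv \<sigma> (wp {4,6}) +
    qv \<sigma> (wt {1,3,5} 1) + 2 * qv \<sigma> (ket {1}) +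
    qv \<sigma> (wt {1,3,5} 3) + 2 * qv \<sigma> (ket {3}) +
    qv \<sigma> (wt {1,3,5} 5) + 2 * qv \<sigma> (ket {5}) +
    qv \<sigma> (wt {2,4,6} 2) + 2 * qv \<sigma> (ket {2}) +
    qv \<sigma> (wt {2,4,6} 4) + 2 * qv \<sigma> (ket {4}) +
    qv \<sigma> (wt {2,4,6} 6) + 2 * qv \<sigma> (ket {6})"
proof -
  have z1: "\<And>S T. S \<notin> D \<Longrightarrow> \<sigma> S T = 0" and z2: "\<And>S T. S \<notin> D \<Longrightarrow> \<sigma> T S = 0"
    using Z unfolding Z_def by auto
  show ?thesis
    unfolding tr_Z[OF Z] TW_Z[OF Z] sumD sumP qv_def wp_def wt_def
    apply (simp only: q_two q_ket litQ)
    apply (simp add: z1 z2 memD' Q_eq insert_subset ins_norm)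
    done
qed


lemma Re3: "Re (3 * z) = 3 * Re z" and Re2: "Re (2 * z) = 2 * Re z" by simp_all

lemma wp_R: "p \<subseteq> Q \<Longrightarrow> (\<Sum>T\<in>Pow Q. \<sigma> X T * wp p T) = \<sigma> X p - \<sigma> X {} / 3"
  unfolding wp_def by (simp add: right_diff_distrib sum_subtractf sum_divide_distrib[symmetric] sum_ketR)
lemma wp_L: "p \<subseteq> Q \<Longrightarrow> (\<Sum>S\<in>Pow Q. cnj (wp p S) * \<sigma> S X) = \<sigma> p X - \<sigma> {} X / 3"
  unfolding wp_def by (simp add: left_diff_distrib sum_subtractf sum_divide_distrib[symmetric] sum_ketL)
lemma wt_R: "t \<subseteq> Q \<Longrightarrow> c \<in> Q \<Longrightarrow> (\<Sum>T\<in>Pow Q. \<sigma> X T * wt t c T) = \<sigma> X t - \<sigma> X {c}"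
  unfolding wt_def by (simp add: right_diff_distrib sum_subtractf sum_ketR)
lemma wt_L: "t \<subseteq> Q \<Longrightarrow> c \<in> Q \<Longrightarrow> (\<Sum>S\<in>Pow Q. cnj (wt t c S) * \<sigma> S X) = \<sigma> t X - \<sigma> {c} X"
  unfolding wt_def by (simp add: left_diff_distrib sum_subtractf sum_ketL)
lemma k_R: "A \<subseteq> Q \<Longrightarrow> (\<Sum>T\<in>Pow Q. \<sigma> X T * ket A T) = \<sigma> X A" by (rule sum_ketR)
lemma k_L: "A \<subseteq> Q \<Longrightarrow> (\<Sum>S\<in>Pow Q. cnj (ket A S) * \<sigma> S X) = \<sigma> A X" by (simp add: sum_ketL)

lemma K_zero: assumes dens: "density \<sigma>" and Z: "Z \<sigma>" and ge: "3 \<le> Re (TW \<sigma>)"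
  shows "qv \<sigma> (wp {1,3}) = 0 \<and> qv \<sigma> (wp {1,4}) = 0 \<and> qv \<sigma> (wp {1,5}) = 0 \<and> qv \<sigma> (wp {2,4}) = 0 \<and> qv \<sigma> (wp {2,5}) = 0 \<and> qv \<sigma> (wp {2,6}) = 0 \<and> qv \<sigma> (wp {3,5}) = 0 \<and> qv \<sigma> (wp {3,6}) = 0 \<and> qv \<sigma> (wp {4,6}) = 0 \<and> qv \<sigma> (wt {1,3,5} 1) = 0 \<and> qv \<sigma> (wt {1,3,5} 3) = 0 \<and> qv \<sigma> (wt {1,3,5} 5) = 0 \<and> qv \<sigma> (wt {2,4,6} 2) = 0 \<and> qv \<sigma> (wt {2,4,6} 4) = 0 \<and> qv \<sigma> (wt {2,4,6} 6) = 0 \<and> qv \<sigma> (ket {1}) = 0 \<and> qv \<sigma> (ket {3}) = 0 \<and> qv \<sigma> (ket {5}) = 0 \<and> qv \<sigma> (ket {2}) = 0 \<and> qv \<sigma> (ket {4}) = 0 \<and> qv \<sigma> (ket {6}) = 0"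
proof -
  have tr1: "tr \<sigma> = 1" using dens unfolding density_def tr_def by simp
  have pos: "\<And>w. Im (qv \<sigma> w) = 0 \<and> 0 \<le> Re (qv \<sigma> w)" using dens unfolding density_def qv_def by simp
  have "Re (3 * tr \<sigma> - TW \<sigma>) \<le> 0" using tr1 ge by simp
  then have "Re (3 * qv \<sigma> (wp {1,3}) +
    3 * qv \<sigma> (wp {1,4}) +
    3 * qv \<sigma> (wp {1,5}) +
    3 * qv \<sigma> (wp {2,4}) +
    3 * qv \<sigma> (wp {2,5}) +
    3 * qv \<sigma> (wp {2,6}) +
    3 * qv \<sigma> (wp {3,5}) +
    3 * qv \<sigma> (wp {3,6}) +
    3 * qv \<sigma> (wp {4,6}) +
    qv \<sigma> (wt {1,3,5} 1) + 2 * qv \<sigma> (ket {1}) +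
    qv \<sigma> (wt {1,3,5} 3) + 2 * qv \<sigma> (ket {3}) +
    qv \<sigma> (wt {1,3,5} 5) + 2 * qv \<sigma> (ket {5}) +
    qv \<sigma> (wt {2,4,6} 2) + 2 * qv \<sigma> (ket {2}) +
    qv \<sigma> (wt {2,4,6} 4) + 2 * qv \<sigma> (ket {4}) +
    qv \<sigma> (wt {2,4,6} 6) + 2 * qv \<sigma> (ket {6})) \<le> 0" unfolding SOS[OF Z] .
  then have le: "3 * Re (qv \<sigma> (wp {1,3})) + 3 * Re (qv \<sigma> (wp {1,4})) + 3 * Re (qv \<sigma> (wp {1,5})) + 3 * Re (qv \<sigma> (wp {2,4})) + 3 * Re (qv \<sigma> (wp {2,5})) + 3 * Re (qv \<sigma> (wp {2,6})) + 3 * Re (qv \<sigma> (wp {3,5})) + 3 * Re (qv \<sigma> (wp {3,6})) + 3 * Re (qv \<sigma> (wp {4,6})) + Re (qv \<sigma> (wt {1,3,5} 1)) + Re (qv \<sigma> (wt {1,3,5} 3)) + Re (qv \<sigma> (wt {1,3,5} 5)) + Re (qv \<sigma> (wt {2,4,6} 2)) + Re (qv \<sigma> (wt {2,4,6} 4)) + Re (qv \<sigma> (wt {2,4,6} 6)) + 2 * Re (qv \<sigma> (ket {1})) + 2 * Re (qv \<sigma> (ket {3})) + 2 * Re (qv \<sigma> (ket {5})) + 2 * Re (qv \<sigma> (ket {2})) + 2 * Re (qv \<sigma> (ket {4})) + 2 * Re (qv \<sigma> (ket {6})) \<le> 0"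
    by (simp only: plus_complex.sel Re3 Re2 add.assoc)
  have all: "Re (qv \<sigma> (wp {1,3})) = 0 \<and> Re (qv \<sigma> (wp {1,4})) = 0 \<and> Re (qv \<sigma> (wp {1,5})) = 0 \<and> Re (qv \<sigma> (wp {2,4})) = 0 \<and> Re (qv \<sigma> (wp {2,5})) = 0 \<and> Re (qv \<sigma> (wp {2,6})) = 0 \<and> Re (qv \<sigma> (wp {3,5})) = 0 \<and> Re (qv \<sigma> (wp {3,6})) = 0 \<and> Re (qv \<sigma> (wp {4,6})) = 0 \<and> Re (qv \<sigma> (wt {1,3,5} 1)) = 0 \<and> Re (qv \<sigma> (wt {1,3,5} 3)) = 0 \<and> Re (qv \<sigma> (wt {1,3,5} 5)) = 0 \<and> Re (qv \<sigma> (wt {2,4,6} 2)) = 0 \<and> Re (qv \<sigma> (wt {2,4,6} 4)) = 0 \<and> Re (qv \<sigma> (wt {2,4,6} 6)) = 0 \<and> Re (qv \<sigma> (ket {1})) = 0 \<and> Re (qv \<sigma> (ket {3})) = 0 \<and> Re (qv \<sigma> (ket {5})) = 0 \<and> Re (qv \<sigma> (ket {2})) = 0 \<and> Re (qv \<sigma> (ket {4})) = 0 \<and> Re (qv \<sigma> (ket {6})) = 0"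
    using le pos[of "wp {1,3}"] pos[of "wp {1,4}"] pos[of "wp {1,5}"] pos[of "wp {2,4}"] pos[of "wp {2,5}"] pos[of "wp {2,6}"] pos[of "wp {3,5}"] pos[of "wp {3,6}"] pos[of "wp {4,6}"] pos[of "wt {1,3,5} 1"] pos[of "wt {1,3,5} 3"] pos[of "wt {1,3,5} 5"] pos[of "wt {2,4,6} 2"] pos[of "wt {2,4,6} 4"] pos[of "wt {2,4,6} 6"] pos[of "ket {1}"] pos[of "ket {3}"] pos[of "ket {5}"] pos[of "ket {2}"] pos[of "ket {4}"] pos[of "ket {6}"] by linarith
  have z: "\<And>z. Im z = 0 \<Longrightarrow> Re z = 0 \<Longrightarrow> z = 0" by (simp add: complex_eq_iff)
  show ?thesis using all pos[of "wp {1,3}"] pos[of "wp {1,4}"] pos[of "wp {1,5}"] pos[of "wp {2,4}"] pos[of "wp {2,5}"] pos[of "wp {2,6}"] pos[of "wp {3,5}"] pos[of "wp {3,6}"] pos[of "wp {4,6}"] pos[of "wt {1,3,5} 1"] pos[of "wt {1,3,5} 3"] pos[of "wt {1,3,5} 5"] pos[of "wt {2,4,6} 2"] pos[of "wt {2,4,6} 4"] pos[of "wt {2,4,6} 6"] pos[of "ket {1}"] pos[of "ket {3}"] pos[of "ket {5}"] pos[of "ket {2}"] pos[of "ket {4}"] pos[of "ket {6}"] z by metis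
qed



lemma cnj_fP[simp]: "cnj (fP S) = fP S" unfolding fP_def by simp
lemma fP_out: "\<not> S \<subseteq> Q \<Longrightarrow> fP S = 0" unfolding fP_def using P_subQ by auto

lemma card_P: "card P = 9" unfolding P_set using distinct_card[OF Pl_dist] by (simp add: Pl_def)

lemma sum_fP: "(\<Sum>S\<in>Pow Q. fP S * fP S) = 2"
proof -
  have "(\<Sum>S\<in>Pow Q. fP S * fP S) = (\<Sum>S\<in>insert {} P. fP S * fP S)"
    by (rule sum.mono_neutral_right) (use P_subQ fP_def in auto)
  also have "\<dots> = fP {} * fP {} + (\<Sum>S\<in>P. fP S * fP S)" by simp
  also have "(\<Sum>S\<in>P. fP S * fP S) = (\<Sum>S\<in>P. 1/9)" by (rule sum.cong) (auto simp: fP_def)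
  also have "fP {} * fP {} + (\<Sum>S\<in>P. (1/9::complex)) = 2" by (simp add: card_P fP_def)
  finally show ?thesis .
qed

lemma K: assumes dens: "density \<sigma>" and Z: "Z \<sigma>" and ge: "3 \<le> Re (TW \<sigma>)"
  shows "\<sigma> = proj Psi"
proof -
  note qz = K_zero[OF dens Z ge]
  have supp: "\<And>S T. \<not> (S \<subseteq> Q \<and> T \<subseteq> Q) \<Longrightarrow> \<sigma> S T = 0" using dens unfolding density_def by blast
  have kR: "\<And>w X. qv \<sigma> w = 0 \<Longrightarrow> X \<subseteq> Q \<Longrightarrow> (\<Sum>T\<in>Pow Q. \<sigma> X T * w T) = 0"
    using kernel[OF dens] unfolding qv_def by blast
  have kL: "\<And>w X. qv \<sigma> w = 0 \<Longrightarrow> X \<subseteq> Q \<Longrightarrow> (\<Sum>S\<in>Pow Q. cnj (w S) * \<sigma> S X) = 0"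
    using kernel[OF dens] unfolding qv_def by blast
  have qP: "\<And>p. p \<in> P \<Longrightarrow> qv \<sigma> (wp p) = 0"
    using qz unfolding P_def
    apply (simp only: insert_iff empty_iff simp_thms)
    apply (elim disjE; hypsubst; simp)
    done
  have qS: "\<And>c. c \<in> {1,2,3,4,5,6} \<Longrightarrow> qv \<sigma> (ket {c}) = 0"
    using qz
    apply (simp only: insert_iff empty_iff simp_thms)
    apply (elim disjE; hypsubst; simp)
    done
  have colp: "\<sigma> X p = \<sigma> X {} / 3" if "p \<in> P" for X p
  proof (cases "X \<subseteq> Q")
    case True
    then show ?thesis using kR[OF qP[OF that] True] wp_R[OF P_subQ[OF that], where \<sigma>=\<sigma> and X=X] by simp
  next
    case False
    then show ?thesis using supp by simp
  qed
  have rowp: "\<sigma> p X = \<sigma> {} X / 3" if "p \<in> P" for X p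
  proof (cases "X \<subseteq> Q")
    case True
    then show ?thesis using kL[OF qP[OF that] True] wp_L[OF P_subQ[OF that], where \<sigma>=\<sigma> and X=X] by simp
  next
    case False
    then show ?thesis using supp by simp
  qed
  have cQ: "c \<in> {1,2,3,4,5,6} \<Longrightarrow> {c} \<subseteq> Q" for c :: nat by (auto simp: Q_eq)
  have colS: "\<sigma> X {c} = 0" if "c \<in> {1,2,3,4,5,6}" for X c
  proof (cases "X \<subseteq> Q")
    case True
    then show ?thesis using kR[OF qS[OF that] True] k_R[OF cQ[OF that], where \<sigma>=\<sigma> and X=X] by simp
  next
    case False
    then show ?thesis using supp by simp
  qed
  have rowS: "\<sigma> {c} X = 0" if "c \<in> {1,2,3,4,5,6}" for X c
  proof (cases "X \<subseteq> Q")
    case True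
    then show ?thesis using kL[OF qS[OF that] True] k_L[OF cQ[OF that], where \<sigma>=\<sigma> and X=X] by simp
  next
    case False
    then show ?thesis using supp by simp
  qed
  have tQ: "{1,3,5} \<subseteq> Q" "{2,4,6} \<subseteq> Q" "(1::nat) \<in> Q" "(2::nat) \<in> Q" by (auto simp: Q_eq)
  have colT: "\<sigma> X {1,3,5} = 0 \<and> \<sigma> X {2,4,6} = 0" for X
  proof (cases "X \<subseteq> Q")
    case True
    have "\<sigma> X {1,3,5} - \<sigma> X {1} = 0" using kR[of "wt {1,3,5} 1", OF _ True] qz wt_R[OF tQ(1) tQ(3), where \<sigma>=\<sigma> and X=X] by simp
    moreover have "\<sigma> X {2,4,6} - \<sigma> X {2} = 0" using kR[of "wt {2,4,6} 2", OF _ True] qz wt_R[OF tQ(2) tQ(4), where \<sigma>=\<sigma> and X=X] by simp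
    ultimately show ?thesis using colS[of 1 X] colS[of 2 X] by simp
  next
    case False
    then show ?thesis using supp by simp
  qed
  have rowT: "\<sigma> {1,3,5} X = 0 \<and> \<sigma> {2,4,6} X = 0" for X
  proof (cases "X \<subseteq> Q")
    case True
    have "\<sigma> {1,3,5} X - \<sigma> {1} X = 0" using kL[of "wt {1,3,5} 1", OF _ True] qz wt_L[OF tQ(1) tQ(3), where \<sigma>=\<sigma> and X=X] by simp
    moreover have "\<sigma> {2,4,6} X - \<sigma> {2} X = 0" using kL[of "wt {2,4,6} 2", OF _ True] qz wt_L[OF tQ(2) tQ(4), where \<sigma>=\<sigma> and X=X] by simp
    ultimately show ?thesis using rowS[of 1 X] rowS[of 2 X] by simp
  next
    case False
    then show ?thesis using supp by simp
  qed
  have other: "S \<in> {{1},{2},{3},{4},{5},{6},{1,3,5},{2,4,6}}" if "S \<in> D" "S \<notin> P" "S \<noteq> {}" for S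
    using that unfolding D_def
    apply (simp only: insert_iff empty_iff simp_thms)
    apply (elim disjE; hypsubst; simp add: P_def)
    done
  have col: "\<sigma> X S = fP S * \<sigma> X {}" for X S
  proof (cases "S = {}")
    case True then show ?thesis by (simp add: fP_def)
  next
    case ne: False
    show ?thesis
    proof (cases "S \<in> P")
      case True then show ?thesis using colp[OF True, of X] ne by (simp add: fP_def)
    next
      case nP: False
      have "\<sigma> X S = 0"
      proof (cases "S \<in> D")
        case True
        from other[OF True nP ne] have "S = {1} \<or> S = {2} \<or> S = {3} \<or> S = {4} \<or> S = {5} \<or> S = {6} \<or> S = {1,3,5} \<or> S = {2,4,6}"
          by (simp only: insert_iff empty_iff simp_thms)
        then show ?thesis using colS[of 1 X] colS[of 2 X] colS[of 3 X] colS[of 4 X] colS[of 5 X] colS[of 6 X] colT[of X] by (elim disjE; simp)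
      next
        case False then show ?thesis using Z unfolding Z_def by blast
      qed
      then show ?thesis using ne nP by (simp add: fP_def)
    qed
  qed
  have row: "\<sigma> S X = fP S * \<sigma> {} X" for X S
  proof (cases "S = {}")
    case True then show ?thesis by (simp add: fP_def)
  next
    case ne: False
    show ?thesis
    proof (cases "S \<in> P")
      case True then show ?thesis using rowp[OF True, of X] ne by (simp add: fP_def)
    next
      case nP: False
      have "\<sigma> S X = 0"
      proof (cases "S \<in> D")
        case True
        from other[OF True nP ne] have "S = {1} \<or> S = {2} \<or> S = {3} \<or> S = {4} \<or> S = {5} \<or> S = {6} \<or> S = {1,3,5} \<or> S = {2,4,6}"
          by (simp only: insert_iff empty_iff simp_thms)
        then show ?thesis using rowS[of 1 X] rowS[of 2 X] rowS[of 3 X] rowS[of 4 X] rowS[of 5 X] rowS[of 6 X] rowT[of X] by (elim disjE; simp)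
      next
        case False then show ?thesis using Z unfolding Z_def by blast
      qed
      then show ?thesis using ne nP by (simp add: fP_def)
    qed
  qed
  define c where "c = \<sigma> {} {}"
  have all: "\<sigma> S T = fP S * fP T * c" for S T
    using col[of S T] row[of S "{}"] unfolding c_def by simp
  have "1 = (\<Sum>S\<in>Pow Q. \<sigma> S S)" using dens unfolding density_def by simp
  also have "\<dots> = (\<Sum>S\<in>Pow Q. fP S * fP S) * c" unfolding all by (simp add: sum_distrib_right)
  finally have s0: "c = 1/2" unfolding sum_fP by (simp add: mult.commute)
  have r2: "complex_of_real (sqrt 2) * complex_of_real (sqrt 2) = 2"
    by (simp flip: of_real_mult)
  show ?thesis
  proof (intro ext)
    fix S T
    show "\<sigma> S T = proj Psi S T"
    proof (cases "S \<subseteq> Q \<and> T \<subseteq> Q")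
      case True
      then show ?thesis unfolding proj_def Psi_eq all s0 using r2
        by (simp add: field_simps)
    next
      case False
      then show ?thesis using supp[OF False] unfolding proj_def by auto
    qed
  qed
qed



lemma qv_proj: "qv (proj \<phi>) w = cnj (inner \<phi> w) * inner \<phi> w"
proof -
  have "qv (proj \<phi>) w = (\<Sum>S\<in>Pow Q. \<Sum>T\<in>Pow Q. (cnj (w S) * \<phi> S) * (cnj (\<phi> T) * w T))"
    unfolding qv_def inner_app by (rule sum.cong[OF refl], rule sum.cong[OF refl]) (auto simp: proj_def)
  also have "\<dots> = (\<Sum>S\<in>Pow Q. cnj (w S) * \<phi> S) * (\<Sum>T\<in>Pow Q. cnj (\<phi> T) * w T)"
    by (simp add: sum_product)
  also have "(\<Sum>S\<in>Pow Q. cnj (w S) * \<phi> S) = cnj (inner \<phi> w)"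
    unfolding inner_def by (simp add: mult.commute)
  finally show ?thesis unfolding inner_def .
qed

lemma proj_density: assumes "inner \<phi> \<phi> = 1" shows "density (proj \<phi>)"
proof -
  have a: "\<forall>S T. \<not> (S \<subseteq> Q \<and> T \<subseteq> Q) \<longrightarrow> proj \<phi> S T = 0" unfolding proj_def by auto
  have b: "Im (inner v (app (proj \<phi>) v)) = 0 \<and> 0 \<le> Re (inner v (app (proj \<phi>) v))" for v
    using qv_proj[of \<phi> v] unfolding qv_def by (simp add: complex_mult_cnj)
  have c: "(\<Sum>S\<in>Pow Q. proj \<phi> S S) = 1"
  proof -
    have "(\<Sum>S\<in>Pow Q. proj \<phi> S S) = (\<Sum>S\<in>Pow Q. cnj (\<phi> S) * \<phi> S)"
      by (rule sum.cong) (auto simp: proj_def mult.commute)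
    then show ?thesis using assms unfolding inner_def by simp
  qed
  show ?thesis unfolding density_def using a b c by blast
qed

lemma TW_proj: "TW (proj \<phi>) = inner \<phi> (app W6 \<phi>)"
proof -
  have "TW (proj \<phi>) = (\<Sum>S\<in>Pow Q. \<Sum>T\<in>Pow Q. cnj (\<phi> T) * W6 T S * \<phi> S)"
    unfolding TW_def by (rule sum.cong[OF refl], rule sum.cong[OF refl]) (auto simp: proj_def)
  also have "\<dots> = (\<Sum>T\<in>Pow Q. \<Sum>S\<in>Pow Q. cnj (\<phi> T) * W6 T S * \<phi> S)" by (rule sum.swap)
  finally show ?thesis unfolding inner_app .
qed

lemma P_card: "p \<in> P \<Longrightarrow> card p = 2"
  unfolding P_def
  apply (simp only: insert_iff empty_iff simp_thms)
  apply (elim disjE; hypsubst; simp)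
  done

lemma P_N2: "p \<in> P \<Longrightarrow> p \<in> N2" unfolding N2_def using P_subQ P_card by auto

lemma E_N2: "e \<in> E \<Longrightarrow> e \<in> N2" unfolding N2_def E_def
  apply (simp only: insert_iff empty_iff simp_thms)
  apply (elim disjE; hypsubst; simp add: Q_eq)
  done

lemma E_ne: "e \<in> E \<Longrightarrow> e \<noteq> {}" unfolding E_def by auto

lemma Psi_zero_e: assumes "e \<in> E" "e \<subseteq> A" shows "Psi A = 0"
proof -
  have "A \<noteq> {}" using E_ne[OF assms(1)] assms(2) by auto
  moreover have "A \<notin> P" using E_not_sub_P[OF assms(1)] assms(2) by auto
  ultimately show ?thesis unfolding Psi_eq fP_def by simp
qed

lemma Z_Psi: "Z (proj Psi)"
proof -
  have "{} \<in> D" unfolding D_def by simp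
  then have "S \<notin> D \<Longrightarrow> fP S = 0" for S using P_sub by (auto simp: fP_def)
  then show ?thesis unfolding Z_def proj_def Psi_eq by auto
qed

lemma tr_Psi: "tr (proj Psi) = 1"
proof -
  have "tr (proj Psi) = (\<Sum>S\<in>Pow Q. fP S * fP S) / 2"
    unfolding tr_def proj_def Psi_eq
    by (simp add: sum_divide_distrib field_simps flip: of_real_mult)
  then show ?thesis by (simp add: sum_fP)
qed

lemma TW_Psi: "TW (proj Psi) = 3"
proof -
  have ip: "inner Psi (wp p) = 0" if "p \<in> P" for p
    using wp_R[OF P_subQ[OF that], where \<sigma>="\<lambda>X T. cnj (Psi T)"] that unfolding inner_def
    by (cases "p = {}") (simp_all add: Psi_eq fP_def)
  have c1: "{c} \<notin> P" for c :: nat using P_card by fastforce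
  have t1: "{1,3,5::nat} \<notin> P" "{2,4,6::nat} \<notin> P" using P_card by fastforce+
  have cQ: "c \<in> {1,2,3,4,5,6} \<Longrightarrow> {c} \<subseteq> Q" for c :: nat by (auto simp: Q_eq)
  have ik: "inner Psi (ket {c}) = 0" if "c \<in> {1,2,3,4,5,6}" for c
    using k_R[OF cQ[OF that], where \<sigma>="\<lambda>X T. cnj (Psi T)"] c1 unfolding inner_def
    by (simp add: Psi_eq fP_def)
  have tQ: "{1,3,5} \<subseteq> Q" "{2,4,6} \<subseteq> Q" by (auto simp: Q_eq)
  have it1: "inner Psi (wt {1,3,5} c) = 0" if "c \<in> {1,3,5}" for c
  proof -
    have cq: "c \<in> Q" using that by (auto simp: Q_eq)
    show ?thesis using wt_R[OF tQ(1) cq, where \<sigma>="\<lambda>X T. cnj (Psi T)"] c1 t1 unfolding inner_def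
      by (simp add: Psi_eq fP_def)
  qed
  have it2: "inner Psi (wt {2,4,6} c) = 0" if "c \<in> {2,4,6}" for c
  proof -
    have cq: "c \<in> Q" using that by (auto simp: Q_eq)
    show ?thesis using wt_R[OF tQ(2) cq, where \<sigma>="\<lambda>X T. cnj (Psi T)"] c1 t1 unfolding inner_def
      by (simp add: Psi_eq fP_def)
  qed
  have PP: "{1,3} \<in> P" "{1,4} \<in> P" "{1,5} \<in> P" "{2,4} \<in> P" "{2,5} \<in> P" "{2,6} \<in> P" "{3,5} \<in> P" "{3,6} \<in> P" "{4,6} \<in> P" unfolding P_def by simp_all
  have "3 * tr (proj Psi) - TW (proj Psi) = 0"
    unfolding SOS[OF Z_Psi] qv_proj using ip[OF PP(1)] ip[OF PP(2)] ip[OF PP(3)] ip[OF PP(4)] ip[OF PP(5)]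
      ip[OF PP(6)] ip[OF PP(7)] ip[OF PP(8)] ip[OF PP(9)] it1 it2 ik by simp
  then show ?thesis using tr_Psi by simp
qed

lemma filt: "(\<Sum>C\<in>Pow Q. if C \<inter> p = {} then f C else 0) = (\<Sum>C\<in>Pow (Q - p). f C)"
proof -
  have e: "Pow (Q - p) = {C\<in>Pow Q. C \<inter> p = {}}" by auto
  have "(\<Sum>C\<in>Pow Q. if C \<inter> p = {} then f C else 0) = (\<Sum>C\<in>{C\<in>Pow Q. C \<inter> p = {}}. f C)"
    by (rule sum.inter_filter[symmetric]) simp
  then show ?thesis by (simp only: e)
qed

lemma TW_ptrace: "TW \<sigma> = (\<Sum>p\<in>P. ptrace p \<sigma> {} p + ptrace p \<sigma> p {})"
proof -
  have "TW \<sigma> = (\<Sum>p\<in>P. (\<Sum>C\<in>Pow Q. if C \<inter> p = {} then \<sigma> C (C \<union> p) else 0) + (\<Sum>C\<in>Pow Q. if C \<inter> p = {} then \<sigma> (C \<union> p) C else 0))"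
    unfolding TW_formula by (rule sum.cong[OF refl]) (simp add: sum.distrib[symmetric] if_distrib cong: if_cong)
  also have "\<dots> = (\<Sum>p\<in>P. ptrace p \<sigma> {} p + ptrace p \<sigma> p {})"
    unfolding filt ptrace_def by (simp add: Un_commute)
  finally show ?thesis .
qed

lemma DQLS_zero: assumes "\<phi> \<in> DQLS N2 Psi" "e \<in> E" "e \<subseteq> S" "S \<subseteq> Q" shows "\<phi> S = 0"
proof -
  have "\<phi> \<in> supp (tensor_id e (ptrace e (proj Psi)))" using assms(1,2) E_N2 unfolding DQLS_def by blast
  then obtain v where v: "\<phi> = app (tensor_id e (ptrace e (proj Psi))) v" unfolding supp_def by auto
  have z: "Psi (e \<union> C) = 0" for C using Psi_zero_e[OF assms(2)] by blast
  have pz0: "ptrace e (proj Psi) e B = 0" for B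
    unfolding ptrace_def proj_def z by (auto intro!: sum.neutral)
  have se: "S \<inter> e = e" using assms(3) by auto
  have pz: "ptrace e (proj Psi) (S \<inter> e) B = 0" for B unfolding se by (rule pz0)
  have "app (tensor_id e (ptrace e (proj Psi))) v S = 0"
    unfolding app_def tensor_id_def using assms(4) pz by (auto intro!: sum.neutral)
  then show ?thesis unfolding v .
qed

lemma ptrace_diag: "e \<subseteq> Q \<Longrightarrow> ptrace e \<rho> e e = (\<Sum>C\<in>Pow (Q - e). \<rho> (e \<union> C) (e \<union> C))"
  unfolding ptrace_def by simp

lemma UDA_part: "UDA N2 (proj Psi)"
  unfolding UDA_def
proof (intro allI impI, elim conjE)
  fix \<sigma> assume dens: "density \<sigma>" and eq: "\<forall>N\<in>N2. ptrace N \<sigma> = ptrace N (proj Psi)"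
  have supp: "\<And>S T. \<not> (S \<subseteq> Q \<and> T \<subseteq> Q) \<Longrightarrow> \<sigma> S T = 0" using dens unfolding density_def by blast
  have pos: "\<And>w. Im (qv \<sigma> w) = 0 \<and> 0 \<le> Re (qv \<sigma> w)" using dens unfolding density_def qv_def by simp
  have diag0: "\<sigma> S S = 0" if "e \<in> E" "e \<subseteq> S" "S \<subseteq> Q" for e S
  proof -
    have eQ: "e \<subseteq> Q" using that by auto
    have a: "ptrace e \<sigma> e e = ptrace e (proj Psi) e e" using eq E_N2[OF that(1)] by simp
    have z: "Psi (e \<union> C) = 0" for C using Psi_zero_e[OF that(1)] by blast
    have b: "ptrace e (proj Psi) e e = 0" unfolding ptrace_diag[OF eQ] proj_def z by (auto intro!: sum.neutral)
    have s0: "(\<Sum>C\<in>Pow (Q - e). \<sigma> (e \<union> C) (e \<union> C)) = 0" using a b unfolding ptrace_diag[OF eQ] by simp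
    have qd: "\<sigma> (e \<union> C) (e \<union> C) = qv \<sigma> (ket (e \<union> C))" if "C \<in> Pow (Q - e)" for C
    proof -
      have "e \<union> C \<subseteq> Q" using that eQ by auto
      from q_ket[OF this, of \<sigma>] show ?thesis unfolding qv_def by simp
    qed
    have "(\<Sum>C\<in>Pow (Q - e). Re (\<sigma> (e \<union> C) (e \<union> C))) = 0" using s0
      by (metis Re_sum zero_complex.simps(1))
    then have "\<forall>C\<in>Pow (Q - e). Re (\<sigma> (e \<union> C) (e \<union> C)) = 0"
      by (subst (asm) sum_nonneg_eq_0_iff) (use qd pos in auto)
    moreover have "S - e \<in> Pow (Q - e)" using that by auto
    moreover have "e \<union> (S - e) = S" using that by auto
    ultimately have "Re (\<sigma> S S) = 0" by metis
    moreover have "Im (\<sigma> S S) = 0" using pos[of "ket S"] q_ket[OF that(3)] unfolding qv_def by simp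
    ultimately show ?thesis by (simp add: complex_eq_iff)
  qed
  have Z: "Z \<sigma>" unfolding Z_def
  proof (intro allI impI)
    fix S T assume nD: "S \<notin> D"
    show "\<sigma> S T = 0 \<and> \<sigma> T S = 0"
    proof (cases "S \<subseteq> Q \<and> T \<subseteq> Q")
      case False then show ?thesis using supp by auto
    next
      case True
      then obtain e where e: "e \<in> E" "e \<subseteq> S" using combC nD by blast
      have "qv \<sigma> (ket S) = 0" using diag0[OF e] True q_ket unfolding qv_def by auto
      from kernel[OF dens this[unfolded qv_def], of T] True
      show ?thesis using k_R[of S \<sigma> T] k_L[of S \<sigma> T] True by simp
    qed
  qed
  have "TW \<sigma> = TW (proj Psi)" unfolding TW_ptrace using eq P_N2 by simp
  then have "TW \<sigma> = 3" using TW_Psi by simp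
  then show "\<sigma> = proj Psi" using K[OF dens Z] by simp
qed

theorem mainTheorem6:
  shows "UDA N2 (proj Psi) \<and>
    (\<forall>\<phi>. \<phi> \<in> DQLS N2 Psi \<and> inner \<phi> \<phi> = 1 \<and> proj \<phi> \<noteq> proj Psi \<longrightarrow>
        Re (inner \<phi> (app W6 \<phi>)) < Re (inner Psi (app W6 Psi)))"
proof (intro conjI allI impI)
  show "UDA N2 (proj Psi)" by (rule UDA_part)
next
  fix \<phi> assume h: "\<phi> \<in> DQLS N2 Psi \<and> inner \<phi> \<phi> = 1 \<and> proj \<phi> \<noteq> proj Psi"
  have dens: "density (proj \<phi>)" using proj_density h by blast
  have Z: "Z (proj \<phi>)" unfolding Z_def
  proof (intro allI impI)
    fix S T assume nD: "S \<notin> D"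
    show "proj \<phi> S T = 0 \<and> proj \<phi> T S = 0"
    proof (cases "S \<subseteq> Q")
      case False then show ?thesis unfolding proj_def by auto
    next
      case True
      then obtain e where e: "e \<in> E" "e \<subseteq> S" using combC nD by blast
      have "\<phi> S = 0" using DQLS_zero[OF _ e True] h by blast
      then show ?thesis unfolding proj_def by simp
    qed
  qed
  have "\<not> 3 \<le> Re (TW (proj \<phi>))" using K[OF dens Z] h by blast
  then show "Re (inner \<phi> (app W6 \<phi>)) < Re (inner Psi (app W6 Psi))"
    using TW_Psi unfolding TW_proj by simp
qed

end
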